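(* Let ${\bold h}=(h_1,\ldots,h_N)^T\in\mathbb{C}^N$ with $h_n\ne0$ for all $n$, and $P_\text{ant},P_\text{tot}>0$. Consider the problem: maximize $|{\bold h}^T{\bold w}|^2$ over ${\bold w}\in\mathbb{C}^N$ subject to $|w_n|^2\le P_\text{ant}$ for all $n$ and ${\bold w}^H{\bold w}\le P_\text{tot}$. Order the antennas so that $|h_{n(1)}|\le|h_{n(2)}|\le\cdots\le|h_{n(N)}|$, put $\lambda_i=|h_{n(i)}|/(2\sqrt{P_\text{ant}})$ and $P(\lambda_i)=\sum_{l=1}^{i-1}|h_{n(l)}|^2/(2\lambda_i)^2+(N-i+1)P_\text{ant}$ for $i=1,\ldots,N$. Let $i^*$ be the smallest $i\in\{1,\ldots,N\}$ with $P(\lambda_i)\le P_\text{tot}$, and $i^*=N+1$ if there is none. If $i^*=1$ set $x_n=\sqrt{P_\text{ant}}$ for all $n$; otherwise set $$\lambda^*=\frac12\sqrt{\frac{\sum_{l=1}^{i^*-1}|h_{n(l)}|^2}{P_\text{tot}-(N-i^*+1)P_\text{ant}}}\quad\text{and}\quad x_n=\min\{|h_n|/(2\lambda^* ),\sqrt{P_\text{ant}}\}.$$ Then ${\bold w}$ with $w_n=x_n\exp(-j\angle h_n)$, $n=1,\ldots,N$, is an optimal solution. In particular, if $P_\text{tot}\ge NP_\text{ant}$, the vector $w_n=\frac{h_n^*}{|h_n|}\sqrt{P_\text{ant}}$ is optimal, and if $P_\text{tot}\le P_\text{ant}$, the vector $w_n=\frac{h_n^*}{\|{\bold h}\|_2}\sqrt{P_\text{tot}}$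 is optimal.
   Context: $j$ denotes the imaginary unit, $\angle h$ the argument of a complex number $h$, and $h^*$ its complex conjugate. *)

theory Defs
  imports Complex_Main
begin

text \<open>Antennas are indexed by 1..N; vectors are functions nat => complex
  (only the values on 1..N matter).\<close>

definition feasible :: "real \<Rightarrow> real \<Rightarrow> nat \<Rightarrow> (nat \<Rightarrow> complex) \<Rightarrow> bool" where
  "feasible Pant Ptot N w \<longleftrightarrow>
     (\<forall>n\<in>{1..N}. (cmod (w n))\<^sup>2 \<le> Pant) \<and> (\<Sum>n=1..N. (cmod (w n))\<^sup>2) \<le> Ptot"

definition objective :: "nat \<Rightarrow> (nat \<Rightarrow> complex) \<Rightarrow> (nat \<Rightarrow> complex) \<Rightarrow> real" where
  "objective N h w = (cmod (\<Sum>n=1..N. h n * w n))\<^sup>2"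

definition optimal :: "real \<Rightarrow> real \<Rightarrow> nat \<Rightarrow> (nat \<Rightarrow> complex) \<Rightarrow> (nat \<Rightarrow> complex) \<Rightarrow> bool" where
  "optimal Pant Ptot N h w \<longleftrightarrow>
     feasible Pant Ptot N w \<and> (\<forall>v. feasible Pant Ptot N v \<longrightarrow> objective N h v \<le> objective N h w)"

text \<open>sigma is the ordering n(1),...,n(N).\<close>

definition lam :: "real \<Rightarrow> (nat \<Rightarrow> complex) \<Rightarrow> (nat \<Rightarrow> nat) \<Rightarrow> nat \<Rightarrow> real" where
  "lam Pant h \<sigma> i = cmod (h (\<sigma> i)) / (2 * sqrt Pant)"

definition Pfun :: "real \<Rightarrow> nat \<Rightarrow> (nat \<Rightarrow> complex) \<Rightarrow> (nat \<Rightarrow> nat) \<Rightarrow> nat \<Rightarrow> real" where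
  "Pfun Pant N h \<sigma> i =
     (\<Sum>l=1..<i. (cmod (h (\<sigma> l)))\<^sup>2) / (2 * lam Pant h \<sigma> i)\<^sup>2
     + (real N - real i + 1) * Pant"

definition istar :: "real \<Rightarrow> real \<Rightarrow> nat \<Rightarrow> (nat \<Rightarrow> complex) \<Rightarrow> (nat \<Rightarrow> nat) \<Rightarrow> nat" where
  "istar Pant Ptot N h \<sigma> =
     (if \<exists>i\<in>{1..N}. Pfun Pant N h \<sigma> i \<le> Ptot
      then (LEAST i. i \<in> {1..N} \<and> Pfun Pant N h \<sigma> i \<le> Ptot)
      else N + 1)"

definition lamstar :: "real \<Rightarrow> real \<Rightarrow> nat \<Rightarrow> (nat \<Rightarrow> complex) \<Rightarrow> (nat \<Rightarrow> nat) \<Rightarrow> real" where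
  "lamstar Pant Ptot N h \<sigma> =
     (let k = istar Pant Ptot N h \<sigma> in
      sqrt ((\<Sum>l=1..<k. (cmod (h (\<sigma> l)))\<^sup>2) / (Ptot - (real N - real k + 1) * Pant)) / 2)"

definition xopt :: "real \<Rightarrow> real \<Rightarrow> nat \<Rightarrow> (nat \<Rightarrow> complex) \<Rightarrow> (nat \<Rightarrow> nat) \<Rightarrow> nat \<Rightarrow> real" where
  "xopt Pant Ptot N h \<sigma> n =
     (if istar Pant Ptot N h \<sigma> = 1 then sqrt Pant
      else min (cmod (h n) / (2 * lamstar Pant Ptot N h \<sigma>)) (sqrt Pant))"

definition wopt :: "real \<Rightarrow> real \<Rightarrow> nat \<Rightarrow> (nat \<Rightarrow> complex) \<Rightarrow> (nat \<Rightarrow> nat) \<Rightarrow> nat \<Rightarrow> complex" where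
  "wopt Pant Ptot N h \<sigma> n =
     complex_of_real (xopt Pant Ptot N h \<sigma> n) * exp (- \<i> * complex_of_real (Arg (h n)))"

end

theory Submission
  imports Defs
begin


lemma kkt_point:
  fixes a x y c l :: real
  assumes "l > 0" "0 \<le> a" "0 \<le> y" "y \<le> c" "x = min (a/(2*l)) c"
  shows "a*(y-x) \<le> l*(y\<^sup>2-x\<^sup>2)"
proof (cases "a/(2*l) \<le> c")
  case True
  then have x: "x = a/(2*l)" using assms by simp
  then have a: "a = 2*l*x" using assms(1) by (simp add: field_simps)
  have "l*(y\<^sup>2-x\<^sup>2) - a*(y-x) = l*(y-x)\<^sup>2" unfolding a by (simp add: power2_eq_square algebra_simps)
  moreover have "l*(y-x)\<^sup>2 \<ge> 0" using assms(1) by simp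
  ultimately show ?thesis by linarith
next
  case False
  then have x: "x = c" using assms by simp
  have a: "a \<ge> 2*l*c" using False assms(1) by (simp add: field_simps)
  have "a*(y-c) \<le> 2*l*c*(y-c)" using a assms(4) by (simp add: mult_right_mono_neg)
  moreover have "l*(y\<^sup>2-c\<^sup>2) - 2*l*c*(y-c) = l*(y-c)\<^sup>2" by (simp add: power2_eq_square algebra_simps)
  moreover have "l*(y-c)\<^sup>2 \<ge> 0" using assms(1) by simp
  ultimately show ?thesis unfolding x by linarith
qed

lemma kkt_sum:
  fixes a x y :: "nat \<Rightarrow> real" and c l :: real
  assumes "l > 0" "\<forall>n\<in>A. 0 \<le> a n \<and> 0 \<le> y n \<and> y n \<le> c \<and> x n = min (a n/(2*l)) c"
    and "(\<Sum>n\<in>A. (y n)\<^sup>2) \<le> (\<Sum>n\<in>A. (x n)\<^sup>2)"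
  shows "(\<Sum>n\<in>A. a n * y n) \<le> (\<Sum>n\<in>A. a n * x n)"
proof -
  have "(\<Sum>n\<in>A. a n * y n) - (\<Sum>n\<in>A. a n * x n) = (\<Sum>n\<in>A. a n * (y n - x n))"
    by (simp add: sum_subtractf algebra_simps)
  also have "\<dots> \<le> (\<Sum>n\<in>A. l * ((y n)\<^sup>2 - (x n)\<^sup>2))"
    by (rule sum_mono) (use assms(1,2) kkt_point in blast)
  also have "\<dots> = l * ((\<Sum>n\<in>A. (y n)\<^sup>2) - (\<Sum>n\<in>A. (x n)\<^sup>2))"
    by (simp add: right_diff_distrib sum_subtractf sum_distrib_left)
  also have "\<dots> \<le> 0" using assms(1,3) by (simp add: mult_nonneg_nonpos)
  finally show ?thesis by simp
qed

lemma opt_generic: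
  assumes feas: "feasible Pant Ptot N w"
    and align: "\<forall>n\<in>{1..N}. h n * w n = complex_of_real (cmod (h n) * cmod (w n))"
    and dom: "\<And>y. (\<forall>n\<in>{1..N}. 0 \<le> y n \<and> y n \<le> sqrt Pant) \<Longrightarrow> (\<Sum>n=1..N. (y n)\<^sup>2) \<le> Ptot
        \<Longrightarrow> (\<Sum>n=1..N. cmod (h n) * y n) \<le> (\<Sum>n=1..N. cmod (h n) * cmod (w n))"
  shows "optimal Pant Ptot N h w"
proof -
  have s: "(\<Sum>n=1..N. h n * w n) = complex_of_real (\<Sum>n=1..N. cmod (h n) * cmod (w n))"
    using align by (simp add: of_real_sum)
  have nn: "0 \<le> (\<Sum>n=1..N. cmod (h n) * cmod (w n))" by (simp add: sum_nonneg)
  have ow: "objective N h w = (\<Sum>n=1..N. cmod (h n) * cmod (w n))\<^sup>2"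
    unfolding objective_def s norm_of_real abs_of_nonneg[OF nn] ..
  show ?thesis unfolding optimal_def
  proof (intro conjI allI impI)
    show "feasible Pant Ptot N w" by fact
    fix v assume fv: "feasible Pant Ptot N v"
    have b: "\<forall>n\<in>{1..N}. 0 \<le> cmod (v n) \<and> cmod (v n) \<le> sqrt Pant"
      using fv unfolding feasible_def by (auto intro: real_le_rsqrt)
    have t: "(\<Sum>n=1..N. (cmod (v n))\<^sup>2) \<le> Ptot" using fv unfolding feasible_def by auto
    have "cmod (\<Sum>n=1..N. h n * v n) \<le> (\<Sum>n=1..N. cmod (h n) * cmod (v n))"
      by (rule order_trans[OF norm_sum]) (simp add: norm_mult)
    also have "\<dots> \<le> (\<Sum>n=1..N. cmod (h n) * cmod (w n))" using dom[OF b t] .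
    finally have "cmod (\<Sum>n=1..N. h n * v n) \<le> (\<Sum>n=1..N. cmod (h n) * cmod (w n))" .
    then have "(cmod (\<Sum>n=1..N. h n * v n))\<^sup>2 \<le> (\<Sum>n=1..N. cmod (h n) * cmod (w n))\<^sup>2"
      by (simp add: power_mono)
    then show "objective N h v \<le> objective N h w" unfolding ow by (simp add: objective_def)
  qed
qed



lemma Pfun_eq:
  assumes "Pant > 0" "h (\<sigma> i) \<noteq> 0"
  shows "Pfun Pant N h \<sigma> i = (\<Sum>l=1..<i. (cmod (h (\<sigma> l)))\<^sup>2) * Pant / (cmod (h (\<sigma> i)))\<^sup>2
            + (real N - real i + 1) * Pant"
proof -
  have "(2 * lam Pant h \<sigma> i)\<^sup>2 = (cmod (h (\<sigma> i)))\<^sup>2 / Pant"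
    unfolding lam_def using assms by (simp add: power_divide power_mult_distrib)
  then show ?thesis unfolding Pfun_def using assms by simp
qed

lemma align_rot:
  "h * (complex_of_real x * exp (- \<i> * complex_of_real (Arg h))) = complex_of_real (cmod h * x)"
proof -
  have "h = complex_of_real (cmod h) * exp (\<i> * complex_of_real (Arg h))"
    by (metis rcis_cmod_Arg rcis_def cis_conv_exp)
  then have "h * (complex_of_real x * exp (- \<i> * complex_of_real (Arg h)))
     = complex_of_real (cmod h) * complex_of_real x * (exp (\<i> * complex_of_real (Arg h)) * exp (- \<i> * complex_of_real (Arg h)))"
    by (metis mult.assoc mult.left_commute)
  also have "exp (\<i> * complex_of_real (Arg h)) * exp (- \<i> * complex_of_real (Arg h)) = 1"
    by (simp add: exp_add[symmetric])
  finally show ?thesis by simp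
qed

lemma norm_rot: "cmod (complex_of_real x * exp (- \<i> * complex_of_real (Arg h))) = \<bar>x\<bar>"
  by (simp add: norm_mult)



lemma ratio_sqrt:
  fixes S D t :: real
  assumes "S > 0" "D > 0" "t \<ge> 0"
  shows "t / (2 * (sqrt (S / D) / 2)) = sqrt (t\<^sup>2 * D / S)"
proof -
  have "sqrt (t\<^sup>2 * D / S) = sqrt (t\<^sup>2) * sqrt D / sqrt S" by (simp add: real_sqrt_mult real_sqrt_divide)
  also have "\<dots> = t * sqrt D / sqrt S" using assms by simp
  finally show ?thesis using assms by (simp add: real_sqrt_divide field_simps)
qed

lemma ratio_le:
  fixes S D t P :: real
  assumes "S > 0" "D > 0" "t \<ge> 0" "P > 0"
  shows "t / (2 * (sqrt (S / D) / 2)) \<le> sqrt P \<longleftrightarrow> t\<^sup>2 * D \<le> S * P"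
  unfolding ratio_sqrt[OF assms(1-3)] real_sqrt_le_iff using assms by (simp add: field_simps)

lemma ratio_ge:
  fixes S D t P :: real
  assumes "S > 0" "D > 0" "t \<ge> 0" "P > 0"
  shows "sqrt P \<le> t / (2 * (sqrt (S / D) / 2)) \<longleftrightarrow> S * P \<le> t\<^sup>2 * D"
  unfolding ratio_sqrt[OF assms(1-3)] real_sqrt_le_iff using assms by (simp add: field_simps)

lemma ratio_sq:
  fixes S D t :: real
  assumes "S > 0" "D > 0" "t \<ge> 0"
  shows "(t / (2 * (sqrt (S / D) / 2)))\<^sup>2 = t\<^sup>2 * D / S"
  unfolding ratio_sqrt[OF assms] using assms by simp



lemma part2:
  assumes h_nz: "\<forall>n\<in>{1..N}. h n \<noteq> 0" and Pant_pos: "Pant > 0"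
    and tot: "Ptot \<ge> real N * Pant"
  shows "optimal Pant Ptot N h (\<lambda>n. cnj (h n) / complex_of_real (cmod (h n)) * complex_of_real (sqrt Pant))"
proof -
  let ?w = "\<lambda>n. cnj (h n) / complex_of_real (cmod (h n)) * complex_of_real (sqrt Pant)"
  have nw: "\<forall>n\<in>{1..N}. cmod (?w n) = sqrt Pant" using h_nz Pant_pos by (simp add: norm_mult norm_divide)
  have al: "\<forall>n\<in>{1..N}. h n * ?w n = complex_of_real (cmod (h n) * cmod (?w n))"
  proof
    fix n assume n: "n \<in> {1..N}"
    have "h n * ?w n = (h n * cnj (h n)) / complex_of_real (cmod (h n)) * complex_of_real (sqrt Pant)"
      by simp
    also have "h n * cnj (h n) = complex_of_real ((cmod (h n))\<^sup>2)" by (metis complex_norm_square of_real_power)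
    finally show "h n * ?w n = complex_of_real (cmod (h n) * cmod (?w n))"
      using nw n h_nz by (simp add: power2_eq_square)
  qed
  have fe: "feasible Pant Ptot N ?w"
    unfolding feasible_def using nw Pant_pos tot by (simp add: sum.cong[OF refl, of _ _ "\<lambda>n. Pant"])
  show ?thesis
  proof (rule opt_generic[OF fe al])
    fix y assume "\<forall>n\<in>{1..N}. 0 \<le> y n \<and> y n \<le> sqrt Pant"
    then show "(\<Sum>n=1..N. cmod (h n) * y n) \<le> (\<Sum>n=1..N. cmod (h n) * cmod (?w n))"
      using nw by (intro sum_mono) (simp add: mult_left_mono)
  qed
qed

lemma part3:
  assumes h_nz: "\<forall>n\<in>{1..N}. h n \<noteq> 0" and Pant_pos: "Pant > 0" and Ptot_pos: "Ptot > 0"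
    and tot: "Ptot \<le> Pant"
  shows "optimal Pant Ptot N h (\<lambda>n. cnj (h n) / complex_of_real (sqrt (\<Sum>m=1..N. (cmod (h m))\<^sup>2))
                                       * complex_of_real (sqrt Ptot))"
proof (cases "N = 0")
  case True
  then show ?thesis unfolding optimal_def feasible_def objective_def using Ptot_pos by simp
next
  case False
  define r where "r = sqrt (\<Sum>m=1..N. (cmod (h m))\<^sup>2)"
  let ?w = "\<lambda>n. cnj (h n) / complex_of_real r * complex_of_real (sqrt Ptot)"
  have "(cmod (h 1))\<^sup>2 \<le> (\<Sum>m=1..N. (cmod (h m))\<^sup>2)"
    using False by (intro member_le_sum) auto
  moreover have "(cmod (h 1))\<^sup>2 > 0" using h_nz False by simp
  ultimately have S: "(\<Sum>m=1..N. (cmod (h m))\<^sup>2) > 0" by linarith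
  then have rpos: "r > 0" unfolding r_def by simp
  have r2: "r\<^sup>2 = (\<Sum>m=1..N. (cmod (h m))\<^sup>2)" unfolding r_def using S by simp
  define l where "l = r / (2 * sqrt Ptot)"
  have lpos: "l > 0" unfolding l_def using rpos Ptot_pos by simp
  have nw: "cmod (?w n) = cmod (h n) / (2*l)" for n
    unfolding l_def using rpos Ptot_pos by (simp add: norm_mult norm_divide)
  have le: "cmod (h n) / (2*l) \<le> sqrt Ptot" if "n \<in> {1..N}" for n
  proof -
    have "(cmod (h n))\<^sup>2 \<le> r\<^sup>2" unfolding r2 using that by (intro member_le_sum) auto
    then have "cmod (h n) \<le> r" using rpos by (simp add: abs_le_square_iff[symmetric])
    then show ?thesis unfolding l_def using rpos Ptot_pos by (simp add: field_simps)
  qed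
  have al: "\<forall>n\<in>{1..N}. h n * ?w n = complex_of_real (cmod (h n) * cmod (?w n))"
  proof
    fix n assume n: "n \<in> {1..N}"
    have "h n * ?w n = (h n * cnj (h n)) / complex_of_real r * complex_of_real (sqrt Ptot)"
      by simp
    also have "h n * cnj (h n) = complex_of_real ((cmod (h n))\<^sup>2)" by (metis complex_norm_square of_real_power)
    finally show "h n * ?w n = complex_of_real (cmod (h n) * cmod (?w n))"
      unfolding nw l_def using rpos Ptot_pos by (simp add: power2_eq_square)
  qed
  have sq: "(\<Sum>n=1..N. (cmod (?w n))\<^sup>2) = Ptot"
  proof -
    have "(\<Sum>n=1..N. (cmod (?w n))\<^sup>2) = (\<Sum>n=1..N. (cmod (h n))\<^sup>2 * (Ptot / r\<^sup>2))"
      using rpos Ptot_pos by (intro sum.cong) (simp_all add: norm_mult norm_divide power_mult_distrib power_divide)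
    also have "\<dots> = Ptot" unfolding sum_distrib_right[symmetric] r2[symmetric] using rpos by simp
    finally show ?thesis .
  qed
  have fe: "feasible Pant Ptot N ?w"
    unfolding feasible_def sq
  proof (intro conjI ballI order_refl)
    fix n assume n: "n \<in> {1..N}"
    have "cmod (?w n) \<le> sqrt Ptot" using le[OF n] nw by simp
    then have "(cmod (?w n))\<^sup>2 \<le> Ptot" using Ptot_pos
      by (metis norm_ge_zero power_mono real_sqrt_pow2 less_imp_le)
    then show "(cmod (?w n))\<^sup>2 \<le> Pant" using tot by linarith
  qed
  have opt: "optimal Pant Ptot N h ?w"
  proof (rule opt_generic[OF fe al])
    fix y assume y: "\<forall>n\<in>{1..N}. 0 \<le> y n \<and> y n \<le> sqrt Pant" and ys: "(\<Sum>n=1..N. (y n)\<^sup>2) \<le> Ptot"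
    show "(\<Sum>n=1..N. cmod (h n) * y n) \<le> (\<Sum>n=1..N. cmod (h n) * cmod (?w n))"
    proof (rule kkt_sum[OF lpos, where c = "sqrt Pant"])
      show "\<forall>n\<in>{1..N}. 0 \<le> cmod (h n) \<and> 0 \<le> y n \<and> y n \<le> sqrt Pant \<and> cmod (?w n) = min (cmod (h n) / (2 * l)) (sqrt Pant)"
      proof
        fix n assume n: "n \<in> {1..N}"
        have "cmod (h n) / (2*l) \<le> sqrt Pant" using le[OF n] tot real_sqrt_le_mono by (meson order_trans)
        then show "0 \<le> cmod (h n) \<and> 0 \<le> y n \<and> y n \<le> sqrt Pant \<and> cmod (?w n) = min (cmod (h n) / (2 * l)) (sqrt Pant)"
          using y n nw by simp
      qed
      show "(\<Sum>n=1..N. (y n)\<^sup>2) \<le> (\<Sum>n=1..N. (cmod (?w n))\<^sup>2)" using ys sq by simp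
    qed
  qed
  then show ?thesis unfolding r_def .
qed



lemma least_cases:
  fixes Q :: "nat \<Rightarrow> bool" and N k :: nat
  assumes kdef: "k = (if \<exists>i\<in>{1..N}. Q i then (LEAST i. i \<in> {1..N} \<and> Q i) else N+1)"
  shows "(k = 1 \<and> (N \<ge> 1 \<longrightarrow> Q 1))
     \<or> (\<exists>j. k = Suc j \<and> 1 \<le> j \<and> j \<le> N \<and> \<not> Q j \<and> (Suc j \<le> N \<longrightarrow> Q (Suc j)))"
proof (cases "\<exists>i\<in>{1..N}. Q i")
  case True
  define m where "m = (LEAST i. i \<in> {1..N} \<and> Q i)"
  have km: "k = m" unfolding kdef m_def using True by (rule if_P)
  have mP: "m \<in> {1..N} \<and> Q m" unfolding m_def by (rule LeastI_ex) (use True in blast)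
  show ?thesis
  proof (cases "m = 1")
    case True then show ?thesis using km mP by simp
  next
    case False
    then obtain j where j: "m = Suc j" "1 \<le> j" using mP by (cases m) auto
    have "j < m" using j by simp
    then have "\<not> (j \<in> {1..N} \<and> Q j)" unfolding m_def by (rule not_less_Least)
    moreover have jN: "j \<in> {1..N}" using j mP by auto
    ultimately have "\<not> Q j" by blast
    moreover have "Q (Suc j)" using mP j by simp
    then have "Suc j \<le> N \<longrightarrow> Q (Suc j)" by simp
    ultimately have "k = Suc j \<and> 1 \<le> j \<and> j \<le> N \<and> \<not> Q j \<and> (Suc j \<le> N \<longrightarrow> Q (Suc j))"
      using km j jN by simp
    then show ?thesis by (intro disjI2 exI[of _ j])
  qed
next
  case False
  have kN: "k = N + 1" unfolding kdef using False by (rule if_not_P)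
  show ?thesis
  proof (cases N)
    case 0 then show ?thesis using kN by simp
  next
    case (Suc j)
    have "\<not> Q N" using False Suc by auto
    then have "k = Suc N \<and> 1 \<le> N \<and> N \<le> N \<and> \<not> Q N \<and> (Suc N \<le> N \<longrightarrow> Q (Suc N))"
      using kN Suc by simp
    then show ?thesis by (intro disjI2 exI[of _ N])
  qed
qed

lemma part1:
  fixes N :: nat and h :: "nat \<Rightarrow> complex" and Pant Ptot :: real
    and \<sigma> :: "nat \<Rightarrow> nat"
  assumes h_nz: "\<forall>n\<in>{1..N}. h n \<noteq> 0"
    and Pant_pos: "Pant > 0" and Ptot_pos: "Ptot > 0"
    and \<sigma>_bij: "bij_betw \<sigma> {1..N} {1..N}"
    and \<sigma>_sorted: "\<forall>i\<in>{1..N}. \<forall>j\<in>{1..N}. i \<le> j \<longrightarrow> cmod (h (\<sigma> i)) \<le> cmod (h (\<sigma> j))"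
  shows "optimal Pant Ptot N h (wopt Pant Ptot N h \<sigma>)"
proof -
  define a where "a = (\<lambda>n. cmod (h n))"
  define k where "k = istar Pant Ptot N h \<sigma>"
  define x where "x = xopt Pant Ptot N h \<sigma>"
  define L where "L = lamstar Pant Ptot N h \<sigma>"
  have \<sigma>in: "\<sigma> i \<in> {1..N}" if "i \<in> {1..N}" for i
    using \<sigma>_bij that by (auto simp: bij_betw_def)
  have apos: "a (\<sigma> i) > 0" if "i \<in> {1..N}" for i
    using h_nz \<sigma>in[OF that] unfolding a_def by auto
  have ann: "a n \<ge> 0" for n unfolding a_def by simp
  have Pf: "Pfun Pant N h \<sigma> i = (\<Sum>l=1..<i. (a (\<sigma> l))\<^sup>2) * Pant / (a (\<sigma> i))\<^sup>2
            + (real N - real i + 1) * Pant" if "i \<in> {1..N}" for i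
    unfolding a_def using Pfun_eq[OF Pant_pos] h_nz \<sigma>in[OF that] by auto
  have kc: "(k = 1 \<and> (N \<ge> 1 \<longrightarrow> Pfun Pant N h \<sigma> 1 \<le> Ptot))
     \<or> (\<exists>j. k = Suc j \<and> 1 \<le> j \<and> j \<le> N \<and> \<not> Pfun Pant N h \<sigma> j \<le> Ptot
           \<and> (Suc j \<le> N \<longrightarrow> Pfun Pant N h \<sigma> (Suc j) \<le> Ptot))"
    by (rule least_cases) (simp add: k_def istar_def)
  have cw: "cmod (wopt Pant Ptot N h \<sigma> n) = \<bar>x n\<bar>" for n
    unfolding wopt_def x_def[symmetric] using norm_rot by simp
  have al0: "h n * wopt Pant Ptot N h \<sigma> n = complex_of_real (cmod (h n) * x n)" for n
    unfolding wopt_def x_def[symmetric] using align_rot by simp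
  from kc show ?thesis
  proof (elim disjE exE conjE)
    assume k1: "k = 1" and P1: "N \<ge> 1 \<longrightarrow> Pfun Pant N h \<sigma> 1 \<le> Ptot"
    have xv: "x n = sqrt Pant" for n unfolding x_def xopt_def k_def[symmetric] using k1 by simp
    have NP: "real N * Pant \<le> Ptot"
    proof (cases "N = 0")
      case True then show ?thesis using Ptot_pos by simp
    next
      case False
      then have "1 \<in> {1..N}" by simp
      then show ?thesis using Pf[of 1] P1 False by simp
    qed
    have cw1: "cmod (wopt Pant Ptot N h \<sigma> n) = sqrt Pant" for n using cw xv Pant_pos by simp
    have fe: "feasible Pant Ptot N (wopt Pant Ptot N h \<sigma>)"
      unfolding feasible_def cw1 using Pant_pos NP by simp
    have al: "\<forall>n\<in>{1..N}. h n * wopt Pant Ptot N h \<sigma> n = complex_of_real (cmod (h n) * cmod (wopt Pant Ptot N h \<sigma> n))"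
      using al0 cw1 xv by simp
    show ?thesis
    proof (rule opt_generic[OF fe al])
      fix y assume "\<forall>n\<in>{1..N}. 0 \<le> y n \<and> y n \<le> sqrt Pant"
      then show "(\<Sum>n=1..N. cmod (h n) * y n) \<le> (\<Sum>n=1..N. cmod (h n) * cmod (wopt Pant Ptot N h \<sigma> n))"
        unfolding cw1 by (intro sum_mono) (simp add: mult_left_mono)
    qed
  next
    fix j assume kj: "k = Suc j" and j1: "1 \<le> j" and jN: "j \<le> N"
      and nPj: "\<not> Pfun Pant N h \<sigma> j \<le> Ptot"
      and Pj1: "Suc j \<le> N \<longrightarrow> Pfun Pant N h \<sigma> (Suc j) \<le> Ptot"
    define S where "S = (\<Sum>l=1..<Suc j. (a (\<sigma> l))\<^sup>2)"
    define S' where "S' = (\<Sum>l=1..<j. (a (\<sigma> l))\<^sup>2)"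
    define D where "D = Ptot - (real N - real j) * Pant"
    define qj where "qj = (a (\<sigma> j))\<^sup>2"
    have jin: "j \<in> {1..N}" using j1 jN by simp
    have qpos: "qj > 0" unfolding qj_def using apos[OF jin] by simp
    have SS: "S = S' + qj" unfolding S_def S'_def qj_def using j1 by (simp add: sum.atLeastLessThan_Suc)
    have Lv: "L = sqrt (S / D) / 2"
      unfolding L_def lamstar_def Let_def k_def[symmetric] kj S_def D_def a_def by simp
    have k1: "k \<noteq> 1" using kj j1 by simp
    have xv: "x n = min (a n / (2 * L)) (sqrt Pant)" for n
      unfolding x_def xopt_def k_def[symmetric] a_def L_def[symmetric] using k1 by simp
    have Spos: "S > 0"
    proof -
      have "(a (\<sigma> 1))\<^sup>2 \<le> S" unfolding S_def using j1 by (intro member_le_sum) auto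
      moreover have "(a (\<sigma> 1))\<^sup>2 > 0" using apos[of 1] j1 jN by simp
      ultimately show ?thesis by linarith
    qed
    have up: "qj * D < S * Pant"
    proof -
      have "Pfun Pant N h \<sigma> j = S' * Pant / qj + (real N - real j + 1) * Pant"
        using Pf[OF jin] unfolding S'_def qj_def .
      then have "Ptot < S' * Pant / qj + (real N - real j + 1) * Pant" using nPj by simp
      then have "Ptot * qj < (S' * Pant / qj + (real N - real j + 1) * Pant) * qj"
        using qpos by (simp add: mult_strict_right_mono)
      also have "\<dots> = S' * Pant + (real N - real j) * Pant * qj + Pant * qj"
        using qpos by (simp add: field_simps)
      finally have "Ptot * qj < S' * Pant + (real N - real j) * Pant * qj + Pant * qj" .
      moreover have "qj * D = Ptot * qj - (real N - real j) * Pant * qj" unfolding D_def by (simp add: algebra_simps)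
      moreover have "S * Pant = S' * Pant + Pant * qj" unfolding SS by (simp add: algebra_simps)
      ultimately show ?thesis by linarith
    qed
    have Dpos: "D > 0"
    proof (cases "Suc j \<le> N")
      case True
      then have sjin: "Suc j \<in> {1..N}" by simp
      have q'pos: "(a (\<sigma> (Suc j)))\<^sup>2 > 0" using apos[OF sjin] by simp
      have "S * Pant / (a (\<sigma> (Suc j)))\<^sup>2 + (real N - real (Suc j) + 1) * Pant \<le> Ptot"
        using Pj1 True Pf[OF sjin] unfolding S_def by simp
      then have "S * Pant / (a (\<sigma> (Suc j)))\<^sup>2 \<le> D" unfolding D_def by simp
      moreover have "S * Pant / (a (\<sigma> (Suc j)))\<^sup>2 > 0" using Spos Pant_pos q'pos by simp
      ultimately show ?thesis by linarith
    next
      case False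
      then have "j = N" using jN by simp
      then show ?thesis unfolding D_def using Ptot_pos by simp
    qed
    have lo: "S * Pant \<le> (a (\<sigma> (Suc j)))\<^sup>2 * D" if "Suc j \<le> N"
    proof -
      have sjin: "Suc j \<in> {1..N}" using that by simp
      have q'pos: "(a (\<sigma> (Suc j)))\<^sup>2 > 0" using apos[OF sjin] by simp
      have "S * Pant / (a (\<sigma> (Suc j)))\<^sup>2 + (real N - real (Suc j) + 1) * Pant \<le> Ptot"
        using Pj1 that Pf[OF sjin] unfolding S_def by simp
      then have "S * Pant / (a (\<sigma> (Suc j)))\<^sup>2 \<le> D" unfolding D_def by simp
      then show ?thesis using q'pos by (simp add: field_simps)
    qed
    have Lpos: "L > 0" unfolding Lv using Spos Dpos by simp
    have xlo: "x (\<sigma> l) = a (\<sigma> l) / (2 * L)" and xlo2: "(x (\<sigma> l))\<^sup>2 = (a (\<sigma> l))\<^sup>2 * D / S"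
      if "l \<in> {1..<Suc j}" for l
    proof -
      have lin: "l \<in> {1..N}" using that jN by auto
      have "a (\<sigma> l) \<le> a (\<sigma> j)" using \<sigma>_sorted lin jin that unfolding a_def by auto
      then have "(a (\<sigma> l))\<^sup>2 \<le> qj" unfolding qj_def using ann by (simp add: power_mono)
      then have "(a (\<sigma> l))\<^sup>2 * D \<le> qj * D" using Dpos by (simp add: mult_right_mono)
      then have "(a (\<sigma> l))\<^sup>2 * D \<le> S * Pant" using up by linarith
      then have "a (\<sigma> l) / (2 * L) \<le> sqrt Pant"
        unfolding Lv using ratio_le[OF Spos Dpos ann Pant_pos] by simp
      then show "x (\<sigma> l) = a (\<sigma> l) / (2 * L)" using xv by simp
      then show "(x (\<sigma> l))\<^sup>2 = (a (\<sigma> l))\<^sup>2 * D / S"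
        unfolding Lv using ratio_sq[OF Spos Dpos ann] by simp
    qed
    have xhi: "x (\<sigma> l) = sqrt Pant" if "l \<in> {Suc j..<Suc N}" for l
    proof -
      have lin: "l \<in> {1..N}" and sjN: "Suc j \<le> N" using that j1 by auto
      have sjin: "Suc j \<in> {1..N}" using sjN by simp
      have "a (\<sigma> (Suc j)) \<le> a (\<sigma> l)" using \<sigma>_sorted lin sjin that unfolding a_def by auto
      then have "(a (\<sigma> (Suc j)))\<^sup>2 \<le> (a (\<sigma> l))\<^sup>2" using ann by (simp add: power_mono)
      then have "(a (\<sigma> (Suc j)))\<^sup>2 * D \<le> (a (\<sigma> l))\<^sup>2 * D" using Dpos by (simp add: mult_right_mono)
      then have "S * Pant \<le> (a (\<sigma> l))\<^sup>2 * D" using lo[OF sjN] by linarith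
      then have "sqrt Pant \<le> a (\<sigma> l) / (2 * L)"
        unfolding Lv using ratio_ge[OF Spos Dpos ann Pant_pos] by simp
      then show ?thesis using xv by simp
    qed
    have sumx: "(\<Sum>n=1..N. (x n)\<^sup>2) = Ptot"
    proof -
      have "(\<Sum>n=1..N. (x n)\<^sup>2) = (\<Sum>l=1..N. (x (\<sigma> l))\<^sup>2)"
        using sum.reindex_bij_betw[OF \<sigma>_bij, of "\<lambda>n. (x n)\<^sup>2"] by simp
      also have "\<dots> = (\<Sum>l=1..<Suc N. (x (\<sigma> l))\<^sup>2)" by (simp add: atLeastLessThanSuc_atLeastAtMost)
      also have "\<dots> = (\<Sum>l=1..<Suc j. (x (\<sigma> l))\<^sup>2) + (\<Sum>l=Suc j..<Suc N. (x (\<sigma> l))\<^sup>2)"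
        by (rule sum.atLeastLessThan_concat[symmetric]) (use j1 jN in auto)
      also have "(\<Sum>l=1..<Suc j. (x (\<sigma> l))\<^sup>2) = (\<Sum>l=1..<Suc j. (a (\<sigma> l))\<^sup>2 * D / S)"
        using xlo2 by (rule sum.cong[OF refl])
      also have "\<dots> = D" unfolding sum_divide_distrib[symmetric] sum_distrib_right[symmetric] S_def[symmetric]
        using Spos by simp
      also have "(\<Sum>l=Suc j..<Suc N. (x (\<sigma> l))\<^sup>2) = (\<Sum>l=Suc j..<Suc N. Pant)"
        using xhi Pant_pos by (intro sum.cong) auto
      also have "\<dots> = (real N - real j) * Pant" using jN by (simp add: of_nat_diff)
      finally show ?thesis unfolding D_def by simp
    qed
    have xnn: "x n \<ge> 0" for n using xv ann Lpos Pant_pos by simp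
    have xle: "x n \<le> sqrt Pant" for n using xv by simp
    have cw2: "cmod (wopt Pant Ptot N h \<sigma> n) = x n" for n using cw xnn by simp
    have fe: "feasible Pant Ptot N (wopt Pant Ptot N h \<sigma>)"
      unfolding feasible_def cw2 sumx
    proof (intro conjI ballI order_refl)
      fix n show "(x n)\<^sup>2 \<le> Pant"
        using xnn xle Pant_pos by (metis power_mono real_sqrt_pow2 less_imp_le)
    qed
    have al: "\<forall>n\<in>{1..N}. h n * wopt Pant Ptot N h \<sigma> n = complex_of_real (cmod (h n) * cmod (wopt Pant Ptot N h \<sigma> n))"
      using al0 cw2 by simp
    show ?thesis
    proof (rule opt_generic[OF fe al])
      fix y assume y: "\<forall>n\<in>{1..N}. 0 \<le> y n \<and> y n \<le> sqrt Pant" and ys: "(\<Sum>n=1..N. (y n)\<^sup>2) \<le> Ptot"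
      show "(\<Sum>n=1..N. cmod (h n) * y n) \<le> (\<Sum>n=1..N. cmod (h n) * cmod (wopt Pant Ptot N h \<sigma> n))"
        unfolding cw2
      proof (rule kkt_sum[OF Lpos, where c = "sqrt Pant"])
        show "\<forall>n\<in>{1..N}. 0 \<le> cmod (h n) \<and> 0 \<le> y n \<and> y n \<le> sqrt Pant \<and> x n = min (cmod (h n) / (2 * L)) (sqrt Pant)"
          using y xv unfolding a_def by simp
        show "(\<Sum>n=1..N. (y n)\<^sup>2) \<le> (\<Sum>n=1..N. (x n)\<^sup>2)" using ys sumx by simp
      qed
    qed
  qed
qed


theorem mainTheorem3:
  fixes N :: nat and h :: "nat \<Rightarrow> complex" and Pant Ptot :: real
    and \<sigma> :: "nat \<Rightarrow> nat"
  assumes h_nz: "\<forall>n\<in>{1..N}. h n \<noteq> 0"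
    and Pant_pos: "Pant > 0" and Ptot_pos: "Ptot > 0"
    and \<sigma>_bij: "bij_betw \<sigma> {1..N} {1..N}"
    and \<sigma>_sorted: "\<forall>i\<in>{1..N}. \<forall>j\<in>{1..N}. i \<le> j \<longrightarrow> cmod (h (\<sigma> i)) \<le> cmod (h (\<sigma> j))"
  shows "optimal Pant Ptot N h (wopt Pant Ptot N h \<sigma>)
    \<and> (Ptot \<ge> real N * Pant \<longrightarrow>
         optimal Pant Ptot N h (\<lambda>n. cnj (h n) / complex_of_real (cmod (h n)) * complex_of_real (sqrt Pant)))
    \<and> (Ptot \<le> Pant \<longrightarrow>
         optimal Pant Ptot N h (\<lambda>n. cnj (h n) / complex_of_real (sqrt (\<Sum>m=1..N. (cmod (h m))\<^sup>2))
                                       * complex_of_real (sqrt Ptot)))"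
  using part1[OF assms] part2[OF h_nz Pant_pos] part3[OF h_nz Pant_pos Ptot_pos] by blast

end
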